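(* Let $S:\mathbb{R}^m\times\mathbb{R}^n\to\mathbb{R}^q$ be a bilinear map with lifted linear operator $\mathscr{S}$, let $\mathcal{K}\subseteq\mathbb{R}^m\times\mathbb{R}^n$, let $\mathcal{K}'=\{xy^T:(x,y)\in\mathcal{K}\}$ and $\mathcal{M}=\mathcal{K}'-\mathcal{K}'=\{X_1-X_2:X_1,X_2\in\mathcal{K}'\}$. Then for every $(x,y)\in\mathcal{K}$, with $z=S(x,y)$, the problem "minimize $\operatorname{rank}(W)$ subject to $\mathscr{S}(W)=z$, $W\in\mathcal{K}'$" has a unique optimal solution (equal to $xy^T$), if and only if $\mathcal{N}(\mathscr{S},2)\cap\mathcal{M}=\{0\}$.
   Context: A map is bilinear if linear in each argument separately. For $j=1,\dots,q$ let $S_j\in\mathbb{R}^{m\times n}$ be the unique matrix with $(S(x,y))_j=x^TS_jy$; the lifted operator $\mathscr{S}:\mathbb{R}^{m\times n}\to\mathbb{R}^q$ is $(\mathscr{S}(W))_j=\operatorname{tr}(S_j^TW)$, so $\mathscr{S}(xy^T)=S(x,y)$. $\mathcal{N}(\mathscr{S},k)=\{X\in\mathbb{R}^{m\times n}:\operatorname{rank}(X)\le k,\ \mathscr{S}(X)=0\}$. The paper phrases the conclusion as "the solution to the rank minimization problem will be correct for every observation $z=S(x,y)$". *)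

theory Defs
  imports "HOL-Analysis.Analysis"
begin

definition outer :: "real^'m \<Rightarrow> real^'n \<Rightarrow> real^'n^'m" where
  "outer x y = (\<chi> i j. x $ i * y $ j)"

text \<open>Lifted linear operator of a bilinear map S: (lift S W)_j = tr(S_j^T W),
  where S_j is the matrix with x^T S_j y = (S x y)_j, i.e. (S_j)_{ik} = (S e_i e_k)_j.\<close>
definition lift_op :: "(real^'m \<Rightarrow> real^'n \<Rightarrow> real^'q) \<Rightarrow> real^'n^'m \<Rightarrow> real^'q" where
  "lift_op S W = (\<chi> j. \<Sum>i\<in>UNIV. \<Sum>k\<in>UNIV. (S (axis i 1) (axis k 1)) $ j * W $ i $ k)"

definition null_rank :: "(real^'n^'m \<Rightarrow> real^'q) \<Rightarrow> nat \<Rightarrow> (real^'n^'m) set" where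
  "null_rank L k = {X. rank X \<le> k \<and> L X = 0}"

definition lift_set :: "((real^'m) \<times> (real^'n)) set \<Rightarrow> (real^'n^'m) set" where
  "lift_set K = {outer x y | x y. (x, y) \<in> K}"

definition diff_set :: "(real^'n^'m) set \<Rightarrow> (real^'n^'m) set" where
  "diff_set A = {X1 - X2 | X1 X2. X1 \<in> A \<and> X2 \<in> A}"

definition rank_min_solutions ::
  "(real^'m \<Rightarrow> real^'n \<Rightarrow> real^'q) \<Rightarrow> ((real^'m) \<times> (real^'n)) set \<Rightarrow> real^'q \<Rightarrow> (real^'n^'m) set" where
  "rank_min_solutions S K z =
     {W. W \<in> lift_set K \<and> lift_op S W = z \<and>
         (\<forall>W'. W' \<in> lift_set K \<and> lift_op S W' = z \<longrightarrow> rank W \<le> rank W')}"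

end

theory Submission
  imports Defs
begin

lemma lift_outer:
  assumes "bilinear S"
  shows "lift_op S (outer x y) = S x y"
proof -
  have ex: "x = (\<Sum>i\<in>UNIV. (x$i) *\<^sub>R axis i 1)"
    using basis_expansion[of x] by (simp add: scalar_mult_eq_scaleR)
  have ey: "y = (\<Sum>k\<in>UNIV. (y$k) *\<^sub>R axis k 1)"
    using basis_expansion[of y] by (simp add: scalar_mult_eq_scaleR)
  have "S x y = (\<Sum>(i,k)\<in>UNIV \<times> UNIV. S ((x$i) *\<^sub>R axis i 1) ((y$k) *\<^sub>R axis k 1))"
    by (subst ex, subst ey, rule bilinear_sum[OF assms])
  also have "\<dots> = (\<Sum>(i,k)\<in>UNIV \<times> UNIV. (y$k * x$i) *\<^sub>R S (axis i 1) (axis k 1))"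
    by (simp add: bilinear_lmul[OF assms] bilinear_rmul[OF assms])
  finally have *: "S x y = (\<Sum>i\<in>UNIV. \<Sum>k\<in>UNIV. (y$k * x$i) *\<^sub>R S (axis i 1) (axis k 1))"
    by (simp add: sum.cartesian_product)
  show ?thesis
    unfolding * lift_op_def outer_def
    by (simp add: vec_eq_iff sum_component mult.commute mult.left_commute)
qed

lemma lift_diff: "lift_op S (A - B) = lift_op S A - lift_op S B"
  unfolding lift_op_def
  by (simp add: vec_eq_iff right_diff_distrib sum_subtractf)

lemma rank_outer_diff: "rank (outer x1 y1 - outer x2 y2) \<le> 2"
proof -
  have "range (\<lambda>v. (outer x1 y1 - outer x2 y2) *v v) \<subseteq> span {x1, x2}"
  proof
    fix w assume "w \<in> range (\<lambda>v. (outer x1 y1 - outer x2 y2) *v v)"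
    then obtain v where v: "w = (outer x1 y1 - outer x2 y2) *v v" by auto
    have "w = (y1 \<bullet> v) *\<^sub>R x1 - (y2 \<bullet> v) *\<^sub>R x2"
    proof -
      have "\<And>i. (\<Sum>j\<in>UNIV. (x1 $ i * y1 $ j - x2 $ i * y2 $ j) * v $ j) =
         (\<Sum>j\<in>UNIV. x1 $ i * (y1 $ j * v $ j)) - (\<Sum>j\<in>UNIV. x2 $ i * (y2 $ j * v $ j))"
        unfolding sum_subtractf[symmetric] by (rule sum.cong) (simp_all add: algebra_simps)
      then have "\<And>i. (\<Sum>j\<in>UNIV. (x1 $ i * y1 $ j - x2 $ i * y2 $ j) * v $ j) =
         y1 \<bullet> v * x1 $ i - y2 \<bullet> v * x2 $ i"
        by (simp add: inner_vec_def sum_distrib_left[symmetric] mult.commute)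
      then show ?thesis unfolding v outer_def
        by (simp add: vec_eq_iff matrix_vector_mult_def)
    qed
    then show "w \<in> span {x1, x2}"
      by (simp add: span_diff span_mul span_base)
  qed
  then have "dim (range (\<lambda>v. (outer x1 y1 - outer x2 y2) *v v)) \<le> card {x1, x2}"
    by (intro dim_le_card) auto
  also have "\<dots> \<le> 2" by (simp add: card_insert_if)
  finally show ?thesis by (simp add: rank_dim_range)
qed

theorem proposition1:
  fixes S :: "real^'m \<Rightarrow> real^'n \<Rightarrow> real^'q"
    and K :: "((real^'m) \<times> (real^'n)) set"
  assumes "bilinear S"
    and "K \<noteq> {}"
  shows "(\<forall>(x, y) \<in> K. rank_min_solutions S K (S x y) = {outer x y})
         \<longleftrightarrow> null_rank (lift_op S) 2 \<inter> diff_set (lift_set K) = {0}"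
proof -
  have inj_iff: "null_rank (lift_op S) 2 \<inter> diff_set (lift_set K) = {0} \<longleftrightarrow>
     (\<forall>X1\<in>lift_set K. \<forall>X2\<in>lift_set K. lift_op S X1 = lift_op S X2 \<longrightarrow> X1 = X2)"
  proof
    assume h: "null_rank (lift_op S) 2 \<inter> diff_set (lift_set K) = {0}"
    show "\<forall>X1\<in>lift_set K. \<forall>X2\<in>lift_set K. lift_op S X1 = lift_op S X2 \<longrightarrow> X1 = X2"
    proof (intro ballI impI)
      fix X1 X2 assume a: "X1 \<in> lift_set K" "X2 \<in> lift_set K" "lift_op S X1 = lift_op S X2"
      then obtain x1 y1 x2 y2 where "X1 = outer x1 y1" "X2 = outer x2 y2"
        unfolding lift_set_def by auto
      then have "rank (X1 - X2) \<le> 2" using rank_outer_diff by simp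
      moreover have "lift_op S (X1 - X2) = 0" using a by (simp add: lift_diff)
      moreover have "X1 - X2 \<in> diff_set (lift_set K)" using a unfolding diff_set_def by blast
      ultimately have "X1 - X2 \<in> {0}" using h unfolding null_rank_def by blast
      then show "X1 = X2" by simp
    qed
  next
    assume h: "\<forall>X1\<in>lift_set K. \<forall>X2\<in>lift_set K. lift_op S X1 = lift_op S X2 \<longrightarrow> X1 = X2"
    obtain x y where xy: "(x,y) \<in> K" using assms(2) by auto
    have "outer x y \<in> lift_set K" using xy unfolding lift_set_def by blast
    then have "0 \<in> diff_set (lift_set K)" unfolding diff_set_def by force
    moreover have "0 \<in> null_rank (lift_op S) 2"
      unfolding null_rank_def lift_op_def by (simp add: vec_eq_iff)
    moreover have "X = 0" if X0: "X \<in> null_rank (lift_op S) 2" "X \<in> diff_set (lift_set K)" for X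
    proof -
      obtain X1 X2 where X: "X = X1 - X2" "X1 \<in> lift_set K" "X2 \<in> lift_set K"
        using X0(2) unfolding diff_set_def by blast
      have "lift_op S X1 = lift_op S X2"
        using X0(1) X unfolding null_rank_def by (simp add: lift_diff)
      then show ?thesis using h X by simp
    qed
    ultimately show "null_rank (lift_op S) 2 \<inter> diff_set (lift_set K) = {0}" by blast
  qed
  show ?thesis
  proof
    assume h: "\<forall>(x, y) \<in> K. rank_min_solutions S K (S x y) = {outer x y}"
    have "\<forall>X1\<in>lift_set K. \<forall>X2\<in>lift_set K. lift_op S X1 = lift_op S X2 \<longrightarrow> X1 = X2"
    proof (intro ballI impI)
      fix X1 X2 assume a: "X1 \<in> lift_set K" "X2 \<in> lift_set K" "lift_op S X1 = lift_op S X2"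
      obtain x1 y1 where X1: "X1 = outer x1 y1" "(x1,y1) \<in> K"
        using a(1) unfolding lift_set_def by blast
      obtain x2 y2 where X2: "X2 = outer x2 y2" "(x2,y2) \<in> K"
        using a(2) unfolding lift_set_def by blast
      have e1: "rank_min_solutions S K (S x1 y1) = {outer x1 y1}"
        using bspec[OF h X1(2)] by simp
      have e2: "rank_min_solutions S K (S x2 y2) = {outer x2 y2}"
        using bspec[OF h X2(2)] by simp
      have "S x1 y1 = S x2 y2"
        using a(3) unfolding X1(1) X2(1) lift_outer[OF assms(1)] .
      then have "{outer x1 y1} = {outer x2 y2}" using e1 e2 by simp
      then show "X1 = X2" unfolding X1(1) X2(1) by simp
    qed
    then show "null_rank (lift_op S) 2 \<inter> diff_set (lift_set K) = {0}" using inj_iff by blast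
  next
    assume "null_rank (lift_op S) 2 \<inter> diff_set (lift_set K) = {0}"
    then have h: "\<forall>X1\<in>lift_set K. \<forall>X2\<in>lift_set K. lift_op S X1 = lift_op S X2 \<longrightarrow> X1 = X2"
      using inj_iff by blast
    show "\<forall>(x, y) \<in> K. rank_min_solutions S K (S x y) = {outer x y}"
    proof (intro ballI, unfold split_paired_all)
      fix x y assume xy: "(x,y) \<in> K"
      have m: "outer x y \<in> lift_set K" using xy unfolding lift_set_def by blast
      have l: "lift_op S (outer x y) = S x y" by (rule lift_outer[OF assms(1)])
      have feas: "W = outer x y" if w1: "W \<in> lift_set K" and w2: "lift_op S W = S x y" for W
      proof -
        have "lift_op S W = lift_op S (outer x y)" using w2 l by simp
        then show ?thesis using h w1 m by blast
      qed
      show "(case (x, y) of (x, y) \<Rightarrow> rank_min_solutions S K (S x y) = {outer x y})"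
      proof (simp only: prod.case, rule set_eqI, rule iffI)
        fix W assume "W \<in> rank_min_solutions S K (S x y)"
        then have "W \<in> lift_set K" "lift_op S W = S x y" unfolding rank_min_solutions_def by blast+
        then show "W \<in> {outer x y}" using feas by blast
      next
        fix W assume "W \<in> {outer x y}"
        then have W: "W = outer x y" by simp
        have "\<forall>W'. W' \<in> lift_set K \<and> lift_op S W' = S x y \<longrightarrow> rank W \<le> rank W'"
          using feas W by blast
        then show "W \<in> rank_min_solutions S K (S x y)"
          unfolding rank_min_solutions_def using m l W by blast
      qed
    qed
  qed
qed

end
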